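(* Let $d\ge1$, $\lambda>0$, $\delta>0$, and let $f:\mathbb{R}^d\to\mathbb{R}$ satisfy: (A1) $f$ is continuous and has at least one minimizer; (A2) $\int_{\mathbb{R}^d}\exp(-f(y)/\delta)\,dy<+\infty$; and let $f$ be $L$-smooth. Assume that for every $x\in\mathbb{R}^d$ the probability measure $\mu_x$ satisfies a Poincaré inequality with constant $C_P(\delta,x)<\infty$. Then for all $x\in\mathbb{R}^d$, \[\|\nabla f^{\lambda,\delta}(x)-\nabla f(x)\|\le L\lambda\|\nabla f^{\lambda,\delta}(x)\|+L\sqrt{d\,C_P(\delta,x)}.\] In particular, the ZOPPA sequence $(x^k)$ satisfies $\|\nabla f(x^k)\|\le(1+L\lambda)\|\nabla f^{\lambda,\delta}(x^k)\|+L\sqrt{d\,C_P(\delta,x^k)}$ for all $k$.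
   Context: $\mu_x$ is the probability measure on $\mathbb{R}^d$ with density proportional to $\exp\big(-\frac{1}{\delta}(f(y)+\frac{1}{2\lambda}\|x-y\|^2)\big)$. A probability measure $\mu$ satisfies a Poincaré inequality with constant $C_P>0$ if $\int|g-\int g\,d\mu|^2d\mu\le C_P\int\|\nabla g\|^2d\mu$ for every smooth, suitably integrable $g$. The soft Moreau envelope is $f^{\lambda,\delta}(x)=-\delta\log\mathbb{E}_{y\sim\mathcal N(x,\lambda\delta I)}[\exp(-f(y)/\delta)]$; the zeroth-order proximal operator is $\operatorname{zprox}^\delta_{\lambda,f}(x)=\dfrac{\mathbb{E}_{y\sim\mathcal N(x,\lambda\delta I)}[y\exp(-f(y)/\delta)]}{\mathbb{E}_{y\sim\mathcal N(x,\lambda\delta I)}[\exp(-f(y)/\delta)]}$. ZOPPA: $x^{k+1}=\operatorname{zprox}^\delta_{\lambda,f}(x^k)$ from any $x^0$. $L$-smooth means differentiable with $L$-Lipschitz gradient. *)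

theory Defs
  imports "HOL-Analysis.Analysis" "HOL-Probability.Probability"
begin

definition gauss_dens :: "real \<Rightarrow> real \<Rightarrow> 'a::euclidean_space \<Rightarrow> 'a \<Rightarrow> real" where
  "gauss_dens lam del x y =
     (2 * pi * lam * del) powr (- real DIM('a) / 2) * exp (- (norm (y - x))\<^sup>2 / (2 * lam * del))"

definition soft_moreau :: "('a::euclidean_space \<Rightarrow> real) \<Rightarrow> real \<Rightarrow> real \<Rightarrow> 'a \<Rightarrow> real" where
  "soft_moreau f lam del x =
     - del * ln (\<integral>y. gauss_dens lam del x y * exp (- f y / del) \<partial>lborel)"

definition zprox :: "('a::euclidean_space \<Rightarrow> real) \<Rightarrow> real \<Rightarrow> real \<Rightarrow> 'a \<Rightarrow> 'a" where
  "zprox f lam del x =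
     (1 / (\<integral>y. gauss_dens lam del x y * exp (- f y / del) \<partial>lborel)) *\<^sub>R
       (\<integral>y. (gauss_dens lam del x y * exp (- f y / del)) *\<^sub>R y \<partial>lborel)"

definition mu_weight :: "('a::euclidean_space \<Rightarrow> real) \<Rightarrow> real \<Rightarrow> real \<Rightarrow> 'a \<Rightarrow> 'a \<Rightarrow> real" where
  "mu_weight f lam del x y = exp (- (f y + (norm (x - y))\<^sup>2 / (2 * lam)) / del)"

definition mu :: "('a::euclidean_space \<Rightarrow> real) \<Rightarrow> real \<Rightarrow> real \<Rightarrow> 'a \<Rightarrow> 'a measure" where
  "mu f lam del x =
     density lborel (\<lambda>y. ennreal (mu_weight f lam del x y / (\<integral>z. mu_weight f lam del x z \<partial>lborel)))"

text \<open>Smooth (C^infinity) real functions: differentiable everywhere, and every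
  directional derivative is again smooth (greatest fixed point).\<close>
coinductive smooth_fun :: "('a::euclidean_space \<Rightarrow> real) \<Rightarrow> bool" where
  "(\<forall>y. g differentiable (at y)) \<Longrightarrow> (\<forall>v. smooth_fun (\<lambda>y. frechet_derivative g (at y) v))
    \<Longrightarrow> smooth_fun g"

definition fgrad :: "('a::euclidean_space \<Rightarrow> real) \<Rightarrow> 'a \<Rightarrow> 'a" where
  "fgrad g y = (\<Sum>b\<in>Basis. frechet_derivative g (at y) b *\<^sub>R b)"

definition poincare :: "'a::euclidean_space measure \<Rightarrow> real \<Rightarrow> bool" where
  "poincare M C \<longleftrightarrow> C > 0 \<and>
     (\<forall>g. smooth_fun g \<and> integrable M (\<lambda>y. (g y)\<^sup>2) \<and> integrable M (\<lambda>y. (norm (fgrad g y))\<^sup>2)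
        \<longrightarrow> (\<integral>y. (g y - (\<integral>z. g z \<partial>M))\<^sup>2 \<partial>M) \<le> C * (\<integral>y. (norm (fgrad g y))\<^sup>2 \<partial>M))"

end

theory Submission
  imports Defs
begin

lemma deriv_bound:
  fixes F :: "'a::euclidean_space \<Rightarrow> real"
  assumes d: "(F has_derivative (\<lambda>h. g \<bullet> h)) (at x)"
    and b: "\<And>t. t > 0 \<Longrightarrow> F (x + t *\<^sub>R v) - F x \<le> t * a + t^2 * c"
  shows "g \<bullet> v \<le> a"
proof -
  have l: "((\<lambda>t. x + t *\<^sub>R v) has_derivative (\<lambda>t. t *\<^sub>R v)) (at 0)"
    by (auto intro!: derivative_eq_intros)
  have "((\<lambda>t. F (x + t *\<^sub>R v)) has_derivative (\<lambda>t. g \<bullet> (t *\<^sub>R v))) (at 0)"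
  proof -
    have d': "(F has_derivative (\<lambda>h. g \<bullet> h)) (at (x + 0 *\<^sub>R v))" using d by simp
    show ?thesis using has_derivative_compose[OF l d'] by simp
  qed
  then have "((\<lambda>t. F (x + t *\<^sub>R v)) has_field_derivative (g \<bullet> v)) (at 0)"
    by (simp add: has_field_derivative_def mult.commute[of _ "g \<bullet> v"])
  then have "((\<lambda>t. (F (x + t *\<^sub>R v) - F x) / t) \<longlongrightarrow> g \<bullet> v) (at 0)"
    by (simp add: has_field_derivative_iff)
  then have "((\<lambda>t. (F (x + t *\<^sub>R v) - F x) / t) \<longlongrightarrow> g \<bullet> v) (at_right 0)"
    by (rule tendsto_mono[OF at_le, rotated]) auto
  then have lim: "((\<lambda>t. (F (x + t *\<^sub>R v) - F x) / t - t * c) \<longlongrightarrow> g \<bullet> v - 0 * c) (at_right 0)"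
    by (intro tendsto_intros) auto
  have ev: "eventually (\<lambda>t. (F (x + t *\<^sub>R v) - F x) / t - t * c \<le> a) (at_right (0::real))"
    unfolding eventually_at_filter
  proof (rule always_eventually, intro allI impI)
    fix t :: real assume "t \<noteq> 0" "t \<in> {0<..}"
    then have t: "t > 0" by auto
    have "(F (x + t *\<^sub>R v) - F x) / t \<le> (t * a + t^2 * c) / t"
      using b[OF t] t by (simp add: divide_right_mono)
    also have "\<dots> = a + t * c" using t by (simp add: field_simps power2_eq_square)
    finally show "(F (x + t *\<^sub>R v) - F x) / t - t * c \<le> a" by simp
  qed
  show ?thesis using tendsto_upperbound[OF lim ev] by simp
qed

lemma sq_exp_bound:
  fixes x y :: "'a::euclidean_space" and c :: real
  assumes c: "c > 0"
  shows "(norm y)\<^sup>2 * exp (- (norm (x - y))\<^sup>2 / c) \<le> 2 * (norm x)\<^sup>2 + 2 * c"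
proof -
  define r where "r = norm (x - y)"
  have ny: "norm y \<le> norm x + r" unfolding r_def
    by (metis add.commute diff_add_cancel norm_minus_commute norm_triangle_ineq)
  have "(norm y)\<^sup>2 \<le> (norm x + r)\<^sup>2" using ny by (simp add: power_mono)
  also have "\<dots> \<le> 2 * (norm x)\<^sup>2 + 2 * r\<^sup>2"
    by (smt (verit) sum_squares_ge_zero power2_sum zero_le_power2 power2_diff)
  finally have a: "(norm y)\<^sup>2 \<le> 2 * (norm x)\<^sup>2 + 2 * r\<^sup>2" .
  have "1 + r\<^sup>2 / c \<le> exp (r\<^sup>2 / c)" by (rule exp_ge_add_one_self)
  then have h1: "r\<^sup>2 \<le> c * exp (r\<^sup>2 / c)" using c
    by (smt (verit, ccfv_SIG) divide_nonneg_pos le_divide_eq mult.commute zero_le_power2)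
  have h2: "1 \<le> exp (r\<^sup>2 / c)" using c by simp
  have b: "(norm y)\<^sup>2 \<le> (2 * (norm x)\<^sup>2 + 2 * c) * exp (r\<^sup>2 / c)"
  proof -
    have "2 * (norm x)\<^sup>2 \<le> 2 * (norm x)\<^sup>2 * exp (r\<^sup>2 / c)"
      using h2 by (simp add: mult_le_cancel_left1)
    then show ?thesis using a h1 by (simp add: distrib_right)
  qed
  have "(norm y)\<^sup>2 * exp (- r\<^sup>2 / c) \<le> (2 * (norm x)\<^sup>2 + 2 * c) * exp (r\<^sup>2 / c) * exp (- r\<^sup>2 / c)"
    using b by (simp add: mult_right_mono)
  also have "\<dots> = 2 * (norm x)\<^sup>2 + 2 * c" by (simp add: mult.assoc flip: exp_add)
  finally show ?thesis unfolding r_def .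
qed

lemma jensen_w:
  fixes w h G :: "'b \<Rightarrow> real"
  assumes iw: "integrable M w" and iwh: "integrable M (\<lambda>y. w y * h y)" and iG: "integrable M G"
    and w0: "\<And>y. 0 \<le> w y" and le: "\<And>y. w y * exp (- h y) \<le> G y"
    and Zp: "integral\<^sup>L M w > 0"
  shows "integral\<^sup>L M w * exp (- (integral\<^sup>L M (\<lambda>y. w y * h y)) / integral\<^sup>L M w) \<le> integral\<^sup>L M G"
proof -
  define Z where "Z = integral\<^sup>L M w"
  define a where "a = integral\<^sup>L M (\<lambda>y. w y * h y) / Z"
  have pt: "w y * (exp (- a) * (1 + a) - exp (- a) * h y) \<le> G y" for y
  proof -
    have "1 + (a - h y) \<le> exp (a - h y)" by (rule exp_ge_add_one_self)
    then have "exp (- a) * (1 + (a - h y)) \<le> exp (- a) * exp (a - h y)" by simp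
    also have "\<dots> = exp (- h y)" by (simp flip: exp_add)
    finally have "exp (- a) * (1 + a) - exp (- a) * h y \<le> exp (- h y)" by (simp add: algebra_simps)
    then have "w y * (exp (- a) * (1 + a) - exp (- a) * h y) \<le> w y * exp (- h y)"
      using w0 by (simp add: mult_left_mono)
    then show ?thesis using le[of y] by linarith
  qed
  have eq: "(\<lambda>y. w y * (exp (- a) * (1 + a) - exp (- a) * h y)) =
      (\<lambda>y. (exp (- a) * (1 + a)) * w y - exp (- a) * (w y * h y))"
    by (auto simp: algebra_simps)
  have int1: "integrable M (\<lambda>y. w y * (exp (- a) * (1 + a) - exp (- a) * h y))"
    unfolding eq using iw iwh by auto
  have "integral\<^sup>L M (\<lambda>y. w y * (exp (- a) * (1 + a) - exp (- a) * h y))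
      = exp (- a) * (1 + a) * Z - exp (- a) * (a * Z)"
    unfolding eq using iw iwh Zp by (simp add: Z_def a_def)
  also have "\<dots> = Z * exp (- a)" by (simp add: algebra_simps)
  finally have "Z * exp (- a) \<le> integral\<^sup>L M G"
    using integral_mono[OF int1 iG pt] by simp
  then show ?thesis by (simp add: Z_def a_def)
qed

locale zsetting =
  fixes f :: "'a::euclidean_space \<Rightarrow> real" and lam del :: real
  assumes lam: "lam > 0" and del: "del > 0"
    and fcont: "continuous_on UNIV f"
    and A2: "(\<integral>\<^sup>+ y. ennreal (exp (- f y / del)) \<partial>lborel) < \<infinity>"
begin

abbreviation W where "W x y \<equiv> mu_weight f lam del x y"
abbreviation Z where "Z x \<equiv> \<integral>y. W x y \<partial>lborel"

lemma f_meas[measurable]: "f \<in> borel_measurable borel"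
  using fcont by (rule borel_measurable_continuous_onI)

lemma W_meas[measurable]: "(\<lambda>y. W x y) \<in> borel_measurable borel"
  unfolding mu_weight_def by measurable

lemma W_eq: "W x y = exp (- f y / del) * exp (- (norm (x - y))\<^sup>2 / (2 * lam * del))"
proof -
  have "- (f y + (norm (x - y))\<^sup>2 / (2 * lam)) / del = - f y / del + - (norm (x - y))\<^sup>2 / (2 * lam * del)"
    using lam del by (simp add: field_simps)
  then show ?thesis unfolding mu_weight_def by (simp flip: exp_add)
qed

lemma W_pos: "W x y > 0" unfolding mu_weight_def by simp

lemma int_ef: "integrable lborel (\<lambda>y. exp (- f y / del))"
  by (rule integrableI_bounded) (use A2 in auto)

lemma W_int_bound:
  fixes \<phi> :: "'a \<Rightarrow> 'b::{banach, second_countable_topology}"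
  assumes [measurable]: "\<phi> \<in> borel_measurable borel" and B: "B \<ge> 0"
    and bd: "\<And>y. norm (\<phi> y) \<le> A + B * (norm y)\<^sup>2"
  shows "integrable lborel (\<lambda>y. W x y *\<^sub>R \<phi> y)"
proof (rule Bochner_Integration.integrable_bound)
  define c where "c = 2 * lam * del"
  have c: "c > 0" using lam del by (simp add: c_def)
  define K where "K = \<bar>A\<bar> + B * (2 * (norm x)\<^sup>2 + 2 * c)"
  show "integrable lborel (\<lambda>y. K * exp (- f y / del))" using int_ef by simp
  show "(\<lambda>y. W x y *\<^sub>R \<phi> y) \<in> borel_measurable lborel" unfolding measurable_lborel2 by measurable
  show "AE y in lborel. norm (W x y *\<^sub>R \<phi> y) \<le> norm (K * exp (- f y / del))"
  proof (rule AE_I2)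
    fix y
    define e where "e = exp (- (norm (x - y))\<^sup>2 / c)"
    have e0: "0 < e" "e \<le> 1" using c by (auto simp: e_def)
    have W: "W x y = exp (- f y / del) * e" by (simp add: W_eq e_def c_def)
    have "e * norm (\<phi> y) \<le> e * (\<bar>A\<bar> + B * (norm y)\<^sup>2)"
      using bd[of y] e0 by (intro mult_left_mono) auto
    also have "\<dots> = e * \<bar>A\<bar> + B * ((norm y)\<^sup>2 * e)" by (simp add: algebra_simps)
    also have "\<dots> \<le> \<bar>A\<bar> + B * (2 * (norm x)\<^sup>2 + 2 * c)"
    proof (rule add_mono)
      show "e * \<bar>A\<bar> \<le> \<bar>A\<bar>" using e0 by (intro mult_left_le_one_le) auto
      show "B * ((norm y)\<^sup>2 * e) \<le> B * (2 * (norm x)\<^sup>2 + 2 * c)"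
        using sq_exp_bound[OF c, of y x] B by (intro mult_left_mono) (auto simp: e_def)
    qed
    finally have *: "e * norm (\<phi> y) \<le> K" by (simp add: K_def)
    have K0: "K \<ge> 0" using B c by (simp add: K_def)
    have "norm (W x y *\<^sub>R \<phi> y) = exp (- f y / del) * (e * norm (\<phi> y))"
      using e0 by (simp add: W abs_mult)
    also have "\<dots> \<le> exp (- f y / del) * K" using * by (simp add: mult_left_mono)
    also have "\<dots> = norm (K * exp (- f y / del))" using K0 by simp
    finally show "norm (W x y *\<^sub>R \<phi> y) \<le> norm (K * exp (- f y / del))" .
  qed
qed

lemma W_int_bound_real:
  fixes \<phi> :: "'a \<Rightarrow> real"
  assumes "\<phi> \<in> borel_measurable borel" and B: "B \<ge> 0"
    and bd: "\<And>y. \<bar>\<phi> y\<bar> \<le> A + B * (norm y)\<^sup>2"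
  shows "integrable lborel (\<lambda>y. W x y * \<phi> y)"
  using W_int_bound[OF assms(1) B, of A x] bd by simp

lemma W_int: "integrable lborel (\<lambda>y. W x y)"
  using W_int_bound_real[of "\<lambda>_. 1" 0 1 x] by simp

lemma Z_pos: "Z x > 0"
proof -
  have "Z x \<ge> 0" using W_pos by (simp add: less_imp_le)
  moreover have "Z x \<noteq> 0"
  proof
    assume "Z x = 0"
    then have h: "AE y in lborel. W x y = 0"
      using integral_nonneg_eq_0_iff_AE[OF W_int] W_pos by (simp add: less_imp_le)
    have "AE y in lborel. W x y = 0 \<longrightarrow> False" using W_pos by (intro AE_I2) (metis less_irrefl)
    from AE_mp[OF h this] have "AE y in (lborel::'a measure). False" .
    then have "ae_filter (lborel::'a measure) = bot" by (simp add: eventually_False)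
    then show False by (simp add: ae_filter_eq_bot_iff)
  qed
  ultimately show ?thesis by simp
qed

end

lemma norm_le_1_sq: "norm (y::'a::real_normed_vector) \<le> 1 + (norm y)\<^sup>2"
proof -
  have "0 \<le> (norm y - 1/2)\<^sup>2" by simp
  then show ?thesis by (simp add: power2_diff power2_eq_square algebra_simps)
qed

context zsetting
begin

definition Y where "Y x = (\<integral>y. W x y *\<^sub>R y \<partial>lborel)"
definition m where "m x = (1 / Z x) *\<^sub>R Y x"

lemma Wy_int: "integrable lborel (\<lambda>y. W x y *\<^sub>R y)"
  by (rule W_int_bound[of _ 1 1]) (auto simp: norm_le_1_sq)

lemma int_affine_int: "integrable lborel (\<lambda>y. W x y * (\<alpha> + \<beta> \<bullet> y))"
proof -
  have eq: "(\<lambda>y. W x y * (\<alpha> + \<beta> \<bullet> y)) = (\<lambda>y. \<alpha> * W x y + \<beta> \<bullet> (W x y *\<^sub>R y))"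
    by (auto simp: algebra_simps)
  show ?thesis unfolding eq
    by (intro Bochner_Integration.integrable_add integrable_mult_right W_int integrable_inner_right Wy_int)
qed

lemma int_affine: "(\<integral>y. W x y * (\<alpha> + \<beta> \<bullet> y) \<partial>lborel) = \<alpha> * Z x + \<beta> \<bullet> Y x"
proof -
  have eq: "(\<lambda>y. W x y * (\<alpha> + \<beta> \<bullet> y)) = (\<lambda>y. \<alpha> * W x y + \<beta> \<bullet> (W x y *\<^sub>R y))"
    by (auto simp: algebra_simps)
  have i1: "integrable lborel (\<lambda>y. \<alpha> * W x y)" using W_int by simp
  have i2: "integrable lborel (\<lambda>y. \<beta> \<bullet> (W x y *\<^sub>R y))" using Wy_int by (rule integrable_inner_right)
  have e1: "(\<integral>y. \<beta> \<bullet> (W x y *\<^sub>R y) \<partial>lborel) = \<beta> \<bullet> Y x"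
    unfolding Y_def by (rule integral_inner_right) (rule Wy_int)
  have e2: "(\<integral>y. \<alpha> * W x y \<partial>lborel) = \<alpha> * Z x"
    by (rule Bochner_Integration.integral_mult_right) (rule W_int)
  show ?thesis unfolding eq Bochner_Integration.integral_add[OF i1 i2] e1 e2 ..
qed

lemma int_transl:
  fixes \<phi> :: "'a \<Rightarrow> real"
  assumes [measurable]: "\<phi> \<in> borel_measurable borel"
  shows "integral\<^sup>L lborel \<phi> = (\<integral>y. \<phi> (w + y) \<partial>lborel)"
    and "integrable lborel \<phi> \<Longrightarrow> integrable lborel (\<lambda>y. \<phi> (w + y))"
proof -
  have [measurable]: "(+) w \<in> measurable lborel borel" by simp
  show "integral\<^sup>L lborel \<phi> = (\<integral>y. \<phi> (w + y) \<partial>lborel)"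
    using integral_distr[of "(+) w" lborel borel \<phi>] by (simp add: lborel_distr_plus)
  show "integrable lborel \<phi> \<Longrightarrow> integrable lborel (\<lambda>y. \<phi> (w + y))"
    using integrable_distr_eq[of "(+) w" lborel borel \<phi>] by (simp add: lborel_distr_plus)
qed

definition c0 :: real where "c0 = (2 * pi * lam * del) powr (- real DIM('a) / 2)"

lemma c0_pos: "c0 > 0" unfolding c0_def using lam del by simp

lemma soft_eq: "soft_moreau f lam del x = - del * ln c0 - del * ln (Z x)"
proof -
  have "gauss_dens lam del x y * exp (- f y / del) = c0 * W x y" for y
    unfolding gauss_dens_def W_eq c0_def by (simp add: norm_minus_commute mult_ac)
  then have "(\<integral>y. gauss_dens lam del x y * exp (- f y / del) \<partial>lborel) = c0 * Z x" by simp
  then show ?thesis unfolding soft_moreau_def using c0_pos Z_pos[of x]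
    by (simp add: ln_mult algebra_simps)
qed

lemma soft_diff: "soft_moreau f lam del x' - soft_moreau f lam del x = - del * (ln (Z x') - ln (Z x))"
  by (simp add: soft_eq algebra_simps)

lemma jensen_ln:
  assumes iwh: "integrable lborel (\<lambda>y. W x y * h y)" and iG: "integrable lborel G"
    and le: "\<And>y. W x y * exp (- h y) \<le> G y" and GZ: "integral\<^sup>L lborel G = Z x'"
  shows "soft_moreau f lam del x' - soft_moreau f lam del x \<le> del * ((\<integral>y. W x y * h y \<partial>lborel) / Z x)"
proof -
  have "Z x * exp (- (\<integral>y. W x y * h y \<partial>lborel) / Z x) \<le> Z x'"
    using jensen_w[OF W_int iwh iG _ le Z_pos] W_pos GZ by (simp add: less_imp_le)
  then have "ln (Z x * exp (- (\<integral>y. W x y * h y \<partial>lborel) / Z x)) \<le> ln (Z x')"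
    using Z_pos[of x] Z_pos[of x'] by (subst ln_le_cancel_iff) auto
  then have "ln (Z x) - (\<integral>y. W x y * h y \<partial>lborel) / Z x \<le> ln (Z x')"
    using Z_pos[of x] by (simp add: ln_mult)
  then have "ln (Z x) - ln (Z x') \<le> (\<integral>y. W x y * h y \<partial>lborel) / Z x" by linarith
  from mult_left_mono[OF this less_imp_le[OF del]]
  have "del * (ln (Z x) - ln (Z x')) \<le> del * ((\<integral>y. W x y * h y \<partial>lborel) / Z x)" .
  moreover have "- del * (ln (Z x') - ln (Z x)) = del * (ln (Z x) - ln (Z x'))" by (simp add: algebra_simps)
  ultimately show ?thesis unfolding soft_diff by linarith
qed

lemma shiftA:
  assumes d: "(soft_moreau f lam del has_derivative (\<lambda>h. g \<bullet> h)) (at x)"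
  shows "g \<bullet> v \<le> v \<bullet> (x - m x) / lam"
proof (rule deriv_bound[OF d])
  fix t :: real assume t: "t > 0"
  define c where "c = 2 * lam * del"
  have c: "c > 0" using lam del by (simp add: c_def)
  define \<alpha> where "\<alpha> = (2 * t * (v \<bullet> x) + t\<^sup>2 * (norm v)\<^sup>2) / c"
  define \<beta> where "\<beta> = - (2 * t / c) *\<^sub>R v"
  have nsq: "(norm (x + t *\<^sub>R v - y))\<^sup>2 = (norm (x - y))\<^sup>2 + c * (\<alpha> + \<beta> \<bullet> y)" for y
  proof -
    have e: "c * (\<alpha> + \<beta> \<bullet> y) = 2 * t * (v \<bullet> x) + t\<^sup>2 * (norm v)\<^sup>2 - 2 * t * (v \<bullet> y)"
      using c by (simp add: \<alpha>_def \<beta>_def field_simps)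
    show ?thesis unfolding e power2_norm_eq_inner
      by (simp add:  inner_add_left inner_add_right inner_diff_left inner_diff_right
        inner_commute algebra_simps power2_eq_square)
  qed
  have Weq: "W (x + t *\<^sub>R v) y = W x y * exp (- (\<alpha> + \<beta> \<bullet> y))" for y
  proof -
    have eq: "- (norm (x + t *\<^sub>R v - y))\<^sup>2 / c = - (norm (x - y))\<^sup>2 / c + - (\<alpha> + \<beta> \<bullet> y)"
      using c by (simp add: nsq field_simps)
    show ?thesis unfolding W_eq c_def[symmetric] eq exp_add by (simp add: mult_ac)
  qed
  have iwh: "integrable lborel (\<lambda>y. W x y * (\<alpha> + \<beta> \<bullet> y))"
    by (rule int_affine_int)
  have "soft_moreau f lam del (x + t *\<^sub>R v) - soft_moreau f lam del x
      \<le> del * ((\<integral>y. W x y * (\<alpha> + \<beta> \<bullet> y) \<partial>lborel) / Z x)"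
    by (rule jensen_ln[OF iwh W_int[of "x + t *\<^sub>R v"]]) (auto simp: Weq)
  also have "\<dots> = del * (\<alpha> + \<beta> \<bullet> m x)"
    using Z_pos[of x] unfolding int_affine m_def by (simp add: field_simps)
  also have "\<dots> = t * (v \<bullet> (x - m x) / lam) + t\<^sup>2 * ((norm v)\<^sup>2 / (2 * lam))"
    using lam del unfolding \<alpha>_def \<beta>_def c_def by (simp add: field_simps inner_diff_right)
  finally show "soft_moreau f lam del (x + t *\<^sub>R v) - soft_moreau f lam del x
      \<le> t * (v \<bullet> (x - m x) / lam) + t\<^sup>2 * ((norm v)\<^sup>2 / (2 * lam))" .
qed

end

locale zsetting2 = zsetting f lam del for f :: "'a::euclidean_space \<Rightarrow> real" and lam del +
  fixes Df :: "'a \<Rightarrow> 'a" and L :: real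
  assumes grad: "\<And>x. (f has_derivative (\<lambda>h. Df x \<bullet> h)) (at x)"
    and lips: "L-lipschitz_on UNIV Df"
begin

lemma L0: "L \<ge> 0" using lips by (rule lipschitz_on_nonneg)

lemma Df_lip: "norm (Df a - Df b) \<le> L * norm (a - b)"
  using lipschitz_onD[OF lips, of a b] by (simp add: dist_norm)

lemma Df_meas[measurable]: "Df \<in> borel_measurable borel"
  using lipschitz_on_continuous_on[OF lips] by (rule borel_measurable_continuous_onI)

lemma Df_bound: "norm (Df y) \<le> (norm (Df 0) + L) + L * (norm y)\<^sup>2"
proof -
  have "norm (Df y) \<le> norm (Df 0) + norm (Df y - Df 0)" by (metis norm_triangle_sub)
  also have "\<dots> \<le> norm (Df 0) + L * norm y" using Df_lip[of y 0] by simp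
  also have "\<dots> \<le> norm (Df 0) + L * (1 + (norm y)\<^sup>2)"
    using L0 norm_le_1_sq[of y] by (simp add: mult_left_mono)
  finally show ?thesis by (simp add: algebra_simps)
qed

lemma WD_int: "integrable lborel (\<lambda>y. W x y *\<^sub>R Df y)"
  by (rule W_int_bound[OF Df_meas L0 Df_bound])

definition D where "D x = (\<integral>y. W x y *\<^sub>R Df y \<partial>lborel)"
definition n where "n x = (1 / Z x) *\<^sub>R D x"

lemma descent:
  assumes t: "t > 0"
  shows "f (y + t *\<^sub>R v) - f y \<le> t * (Df y \<bullet> v) + t\<^sup>2 * (L * (norm v)\<^sup>2)"
proof -
  define \<phi> where "\<phi> s = f (y + s *\<^sub>R v)" for s
  have der: "(\<phi> has_derivative (\<lambda>h. Df (y + s *\<^sub>R v) \<bullet> (h *\<^sub>R v))) (at s within {0..t})" for s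
  proof -
    have l: "((\<lambda>s. y + s *\<^sub>R v) has_derivative (\<lambda>h. h *\<^sub>R v)) (at s within {0..t})"
      by (auto intro!: derivative_eq_intros)
    show ?thesis unfolding \<phi>_def
      using has_derivative_in_compose[OF l grad[of "y + s *\<^sub>R v", THEN has_derivative_at_withinI]]
      by (simp add: o_def)
  qed
  obtain z where z: "z \<in> {0<..<t}" and eq: "\<phi> t - \<phi> 0 = Df (y + z *\<^sub>R v) \<bullet> ((t - 0) *\<^sub>R v)"
    using mvt_simple[OF t der] by blast
  have "Df (y + z *\<^sub>R v) \<bullet> v - Df y \<bullet> v = (Df (y + z *\<^sub>R v) - Df y) \<bullet> v"
    by (simp add: inner_diff_left)
  also have "\<dots> \<le> norm (Df (y + z *\<^sub>R v) - Df y) * norm v" by (rule norm_cauchy_schwarz)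
  also have "\<dots> \<le> L * norm (z *\<^sub>R v) * norm v"
    using Df_lip[of "y + z *\<^sub>R v" y] by (simp add: mult_right_mono)
  also have "\<dots> \<le> L * (t * norm v) * norm v"
    using z L0 by (auto intro!: mult_right_mono mult_left_mono)
  finally have "Df (y + z *\<^sub>R v) \<bullet> v \<le> Df y \<bullet> v + t * (L * (norm v)\<^sup>2)"
    by (simp add: power2_eq_square algebra_simps)
  then have "t * (Df (y + z *\<^sub>R v) \<bullet> v) \<le> t * (Df y \<bullet> v + t * (L * (norm v)\<^sup>2))"
    using t by (simp add: mult_left_mono)
  then show ?thesis using eq unfolding \<phi>_def
    by (simp add: algebra_simps power2_eq_square)
qed

lemma shiftB:
  assumes d: "(soft_moreau f lam del has_derivative (\<lambda>h. g \<bullet> h)) (at x)"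
  shows "g \<bullet> v \<le> v \<bullet> n x"
proof (rule deriv_bound[OF d])
  fix t :: real assume t: "t > 0"
  define \<alpha> where "\<alpha> = t\<^sup>2 * (L * (norm v)\<^sup>2) / del"
  define h where "h y = \<alpha> + (t / del) * (v \<bullet> Df y)" for y
  define G where "G y = W (x + t *\<^sub>R v) (t *\<^sub>R v + y)" for y
  have GZ: "integral\<^sup>L lborel G = Z (x + t *\<^sub>R v)"
    unfolding G_def by (rule int_transl(1)[symmetric]) measurable
  have iG: "integrable lborel G"
    unfolding G_def by (rule int_transl(2)) (measurable, rule W_int)
  have Geq: "G y = W x y * exp (- (f (y + t *\<^sub>R v) - f y) / del)" for y
  proof -
    have "x + t *\<^sub>R v - (t *\<^sub>R v + y) = x - y" by simp
    then have "G y = exp (- (f (y + t *\<^sub>R v) + (norm (x - y))\<^sup>2 / (2 * lam)) / del)"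
      unfolding G_def mu_weight_def by (simp add: add.commute)
    also have "\<dots> = W x y * exp (- (f (y + t *\<^sub>R v) - f y) / del)"
      unfolding mu_weight_def by (simp add: diff_divide_distrib add_divide_distrib flip: exp_add)
    finally show ?thesis .
  qed
  have le: "W x y * exp (- h y) \<le> G y" for y
  proof -
    have "f (y + t *\<^sub>R v) - f y \<le> del * h y"
    proof -
      have "del * h y = t * (Df y \<bullet> v) + t\<^sup>2 * (L * (norm v)\<^sup>2)"
        using del unfolding h_def \<alpha>_def by (simp add: field_simps inner_commute)
      then show ?thesis using descent[OF t, of y v] by linarith
    qed
    then have "- h y \<le> - (f (y + t *\<^sub>R v) - f y) / del" using del by (simp add: field_simps)
    then show ?thesis unfolding Geq using W_pos[of x y] by (intro mult_left_mono) auto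
  qed
  have heq: "(\<lambda>y. W x y * h y) = (\<lambda>y. \<alpha> * W x y + (t / del) * (v \<bullet> (W x y *\<^sub>R Df y)))"
    unfolding h_def by (auto simp: algebra_simps)
  have i1: "integrable lborel (\<lambda>y. \<alpha> * W x y)" using W_int by simp
  have i2: "integrable lborel (\<lambda>y. (t / del) * (v \<bullet> (W x y *\<^sub>R Df y)))"
    by (intro integrable_mult_right integrable_inner_right WD_int)
  have iwh: "integrable lborel (\<lambda>y. W x y * h y)" unfolding heq using i1 i2 by simp
  have e1: "(\<integral>y. (t / del) * (v \<bullet> (W x y *\<^sub>R Df y)) \<partial>lborel) = (t / del) * (v \<bullet> D x)"
  proof -
    have "(\<integral>y. (t / del) * (v \<bullet> (W x y *\<^sub>R Df y)) \<partial>lborel) = (t / del) * (\<integral>y. v \<bullet> (W x y *\<^sub>R Df y) \<partial>lborel)"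
      by (rule Bochner_Integration.integral_mult_right) (rule integrable_inner_right[OF WD_int])
    also have "(\<integral>y. v \<bullet> (W x y *\<^sub>R Df y) \<partial>lborel) = v \<bullet> D x"
      unfolding D_def by (rule integral_inner_right) (rule WD_int)
    finally show ?thesis .
  qed
  have e2: "(\<integral>y. \<alpha> * W x y \<partial>lborel) = \<alpha> * Z x"
    by (rule Bochner_Integration.integral_mult_right) (rule W_int)
  have "soft_moreau f lam del (x + t *\<^sub>R v) - soft_moreau f lam del x
      \<le> del * ((\<integral>y. W x y * h y \<partial>lborel) / Z x)"
    by (rule jensen_ln[OF iwh iG le GZ])
  also have "\<dots> = del * ((\<alpha> * Z x + (t / del) * (v \<bullet> D x)) / Z x)"
    unfolding heq Bochner_Integration.integral_add[OF i1 i2] e1 e2 ..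
  also have "\<dots> = t * (v \<bullet> n x) + t\<^sup>2 * (L * (norm v)\<^sup>2)"
    using Z_pos[of x] del unfolding \<alpha>_def n_def by (simp add: field_simps)
  finally show "soft_moreau f lam del (x + t *\<^sub>R v) - soft_moreau f lam del x
      \<le> t * (v \<bullet> n x) + t\<^sup>2 * (L * (norm v)\<^sup>2)" .
qed

end

lemma cs_lemma:
  fixes w \<phi> :: "'b \<Rightarrow> real"
  assumes iw: "integrable M w" and i1: "integrable M (\<lambda>y. w y * \<phi> y)"
    and i2: "integrable M (\<lambda>y. w y * (\<phi> y)\<^sup>2)" and w0: "\<And>y. 0 \<le> w y"
    and Zp: "integral\<^sup>L M w > 0"
  shows "integral\<^sup>L M (\<lambda>y. w y * \<phi> y) / integral\<^sup>L M w
     \<le> sqrt (integral\<^sup>L M (\<lambda>y. w y * (\<phi> y)\<^sup>2) / integral\<^sup>L M w)"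
proof -
  define Z where "Z = integral\<^sup>L M w"
  define A where "A = integral\<^sup>L M (\<lambda>y. w y * \<phi> y)"
  define B where "B = integral\<^sup>L M (\<lambda>y. w y * (\<phi> y)\<^sup>2)"
  define e where "e = A / Z"
  have eq: "(\<lambda>y. w y * (\<phi> y - e)\<^sup>2) = (\<lambda>y. w y * (\<phi> y)\<^sup>2 - (2 * e) * (w y * \<phi> y) + e\<^sup>2 * w y)"
    by (auto simp: power2_eq_square algebra_simps)
  have ia: "integrable M (\<lambda>y. w y * (\<phi> y)\<^sup>2 - (2 * e) * (w y * \<phi> y))"
    using i1 i2 by simp
  have ib: "integrable M (\<lambda>y. e\<^sup>2 * w y)" using iw by simp
  have "0 \<le> integral\<^sup>L M (\<lambda>y. w y * (\<phi> y - e)\<^sup>2)"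
    using w0 by (intro integral_nonneg_AE AE_I2) simp
  also have "\<dots> = B - 2 * e * A + e\<^sup>2 * Z"
    unfolding eq Bochner_Integration.integral_add[OF ia ib] Bochner_Integration.integral_diff[OF i2 integrable_mult_right[OF i1]]
    using i1 iw by (simp add: A_def B_def Z_def)
  also have "\<dots> = B - e\<^sup>2 * Z" using Zp by (simp add: e_def Z_def power2_eq_square field_simps)
  finally have "e\<^sup>2 * Z \<le> B" by simp
  then have "e\<^sup>2 \<le> B / Z" using Zp by (simp add: Z_def field_simps)
  then have "e \<le> sqrt (B / Z)" by (rule real_le_rsqrt)
  then show ?thesis by (simp add: e_def A_def B_def Z_def)
qed

lemma smooth_affine: "smooth_fun (\<lambda>y. y \<bullet> b + c)"
proof -
  have "\<exists>b c. g = (\<lambda>y. y \<bullet> b + c) \<Longrightarrow> smooth_fun g" for g :: "'a::euclidean_space \<Rightarrow> real"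
  proof (coinduction arbitrary: g rule: smooth_fun.coinduct)
    case (smooth_fun g)
    then obtain b c where g: "g = (\<lambda>y. y \<bullet> b + c)" by blast
    have d: "(g has_derivative (\<lambda>h. h \<bullet> b)) (at y)" for y
      unfolding g by (auto intro!: derivative_eq_intros)
    have fd: "frechet_derivative g (at y) = (\<lambda>h. h \<bullet> b)" for y
      using frechet_derivative_at[OF d[of y]] by simp
    have 1: "\<forall>y. g differentiable at y" using d by (auto simp: differentiable_def)
    have 2: "\<forall>v. (\<exists>ga. (\<lambda>y. frechet_derivative g (at y) v) = ga \<and> (\<exists>b c. ga = (\<lambda>y. y \<bullet> b + c)))"
    proof
      fix v
      show "\<exists>ga. (\<lambda>y. frechet_derivative g (at y) v) = ga \<and> (\<exists>b c. ga = (\<lambda>y. y \<bullet> b + c))"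
        by (rule exI, rule conjI[OF refl]) (rule exI[of _ 0], rule exI[of _ "v \<bullet> b"], simp add: fd)
    qed
    show ?case using 1 2 by blast
  qed
  then show ?thesis by blast
qed

lemma fgrad_lin: "b \<in> Basis \<Longrightarrow> fgrad (\<lambda>y. y \<bullet> b) y = b"
proof -
  assume b: "b \<in> Basis"
  have d: "((\<lambda>y. y \<bullet> b) has_derivative (\<lambda>h. h \<bullet> b)) (at y)"
    by (auto intro!: derivative_eq_intros)
  have fd: "frechet_derivative (\<lambda>y. y \<bullet> b) (at y) = (\<lambda>h. h \<bullet> b)"
    using frechet_derivative_at[OF d] by simp
  show ?thesis unfolding fgrad_def fd
    using euclidean_representation[of b] by (simp add: inner_commute)
qed

lemma sq_diff_bound: "(norm (y - a))\<^sup>2 \<le> 2 * (norm a)\<^sup>2 + 2 * (norm (y::'a::real_normed_vector))\<^sup>2"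
proof -
  have "norm (y - a) \<le> norm y + norm a" by (rule norm_triangle_ineq4)
  then have "(norm (y - a))\<^sup>2 \<le> (norm y + norm a)\<^sup>2" by (simp add: power_mono)
  also have "\<dots> \<le> 2 * (norm a)\<^sup>2 + 2 * (norm y)\<^sup>2"
    using zero_le_power2[of "norm y - norm a"] by (simp add: power2_diff power2_sum algebra_simps)
  finally show ?thesis .
qed

lemma diff_bound: "norm (y - a) \<le> (norm a + 1) + 1 * (norm (y::'a::real_normed_vector))\<^sup>2"
  using norm_triangle_ineq4[of y a] norm_le_1_sq[of y] by simp

context zsetting
begin

lemma intM:
  assumes [measurable]: "\<phi> \<in> borel_measurable borel"
  shows "integral\<^sup>L (mu f lam del x) \<phi> = (\<integral>y. W x y * \<phi> y \<partial>lborel) / Z x"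
proof -
  have "integral\<^sup>L (mu f lam del x) \<phi> = (\<integral>y. (W x y / Z x) *\<^sub>R \<phi> y \<partial>lborel)"
    unfolding mu_def using Z_pos[of x] W_pos
    by (intro integral_density) (auto simp: less_imp_le)
  also have "\<dots> = (\<integral>y. W x y * \<phi> y / Z x \<partial>lborel)" by simp
  finally show ?thesis by simp
qed

lemma intM_int:
  assumes [measurable]: "\<phi> \<in> borel_measurable borel"
    and i: "integrable lborel (\<lambda>y. W x y * \<phi> y)"
  shows "integrable (mu f lam del x) \<phi>"
proof -
  have "integrable lborel (\<lambda>y. (W x y / Z x) *\<^sub>R \<phi> y)" using i by simp
  then show ?thesis unfolding mu_def using Z_pos[of x] W_pos
    by (subst integrable_density) (auto simp: less_imp_le)
qed

lemma poinc_var: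
  assumes P: "poincare (mu f lam del x) C"
  shows "(\<integral>y. W x y * (norm (y - m x))\<^sup>2 \<partial>lborel) / Z x \<le> real DIM('a) * C"
proof -
  have each: "(\<integral>y. W x y * ((y - m x) \<bullet> b)\<^sup>2 \<partial>lborel) / Z x \<le> C" if b: "b \<in> Basis" for b
  proof -
    define g where "g = (\<lambda>y::'a. y \<bullet> b)"
    have [measurable]: "g \<in> borel_measurable borel" unfolding g_def by measurable
    have sm: "smooth_fun g" unfolding g_def using smooth_affine[of b 0] by simp
    have fg: "fgrad g y = b" for y unfolding g_def using fgrad_lin[OF b] .
    have nb: "norm b = 1" using b by simp
    have ig2: "integrable (mu f lam del x) (\<lambda>y. (g y)\<^sup>2)"
    proof (rule intM_int)
      show "integrable lborel (\<lambda>y. W x y * (g y)\<^sup>2)"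
      proof (rule W_int_bound_real[of _ 1 0])
        show "\<bar>(g y)\<^sup>2\<bar> \<le> 0 + 1 * (norm y)\<^sup>2" for y
        proof -
          have "\<bar>y \<bullet> b\<bar>\<^sup>2 \<le> (norm y)\<^sup>2" by (rule power_mono[OF Basis_le_norm[OF b]]) simp
          then show ?thesis unfolding g_def by simp
        qed
      qed auto
    qed measurable
    have ig3: "integrable (mu f lam del x) (\<lambda>y. (norm (fgrad g y))\<^sup>2)"
      unfolding fg nb by (rule intM_int) (auto intro: W_int)
    have "(\<integral>y. (g y - (\<integral>z. g z \<partial>mu f lam del x))\<^sup>2 \<partial>mu f lam del x)
        \<le> C * (\<integral>y. (norm (fgrad g y))\<^sup>2 \<partial>mu f lam del x)"
    proof -
      have "\<forall>g. smooth_fun g \<and> integrable (mu f lam del x) (\<lambda>y. (g y)\<^sup>2) \<and> integrable (mu f lam del x) (\<lambda>y. (norm (fgrad g y))\<^sup>2)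
        \<longrightarrow> (\<integral>y. (g y - (\<integral>z. g z \<partial>mu f lam del x))\<^sup>2 \<partial>mu f lam del x) \<le> C * (\<integral>y. (norm (fgrad g y))\<^sup>2 \<partial>mu f lam del x)"
        using P unfolding poincare_def by (rule conjunct2)
      then have "smooth_fun g \<and> integrable (mu f lam del x) (\<lambda>y. (g y)\<^sup>2) \<and> integrable (mu f lam del x) (\<lambda>y. (norm (fgrad g y))\<^sup>2)
        \<longrightarrow> (\<integral>y. (g y - (\<integral>z. g z \<partial>mu f lam del x))\<^sup>2 \<partial>mu f lam del x) \<le> C * (\<integral>y. (norm (fgrad g y))\<^sup>2 \<partial>mu f lam del x)"
        by (rule spec)
      then show ?thesis using sm ig2 ig3 by blast
    qed
    moreover have "(\<integral>y. (norm (fgrad g y))\<^sup>2 \<partial>mu f lam del x) = 1"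
      unfolding fg nb using Z_pos[of x] by (subst intM) auto
    moreover have "(\<integral>z. g z \<partial>mu f lam del x) = m x \<bullet> b"
    proof -
      have "(\<integral>z. g z \<partial>mu f lam del x) = (\<integral>y. W x y * g y \<partial>lborel) / Z x" by (rule intM) measurable
      also have "(\<integral>y. W x y * g y \<partial>lborel) = (\<integral>y. (W x y *\<^sub>R y) \<bullet> b \<partial>lborel)"
        unfolding g_def by simp
      also have "\<dots> = Y x \<bullet> b" unfolding Y_def by (rule integral_inner_left) (rule Wy_int)
      finally show ?thesis by (simp add: m_def)
    qed
    moreover have "(\<integral>y. (g y - m x \<bullet> b)\<^sup>2 \<partial>mu f lam del x) = (\<integral>y. W x y * ((y - m x) \<bullet> b)\<^sup>2 \<partial>lborel) / Z x"
      by (subst intM) (auto simp: g_def inner_diff_left)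
    ultimately show ?thesis by simp
  qed
  have ib: "integrable lborel (\<lambda>y. W x y * ((y - m x) \<bullet> b)\<^sup>2)" if b: "b \<in> Basis" for b
  proof (rule W_int_bound_real[of _ 2 "2 * (norm (m x))\<^sup>2"])
    show "\<bar>((y - m x) \<bullet> b)\<^sup>2\<bar> \<le> 2 * (norm (m x))\<^sup>2 + 2 * (norm y)\<^sup>2" for y
    proof -
      have "\<bar>(y - m x) \<bullet> b\<bar>\<^sup>2 \<le> (norm (y - m x))\<^sup>2" by (rule power_mono[OF Basis_le_norm[OF b]]) simp
      then have "((y - m x) \<bullet> b)\<^sup>2 \<le> (norm (y - m x))\<^sup>2" by simp
      then show ?thesis using sq_diff_bound[of y "m x"] by simp
    qed
  qed auto
  have sq: "(norm z)\<^sup>2 = (\<Sum>b\<in>Basis. (z \<bullet> b)\<^sup>2)" for z :: 'a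
    unfolding power2_norm_eq_inner using euclidean_inner[of z z] by (simp add: power2_eq_square)
  have "(\<integral>y. W x y * (norm (y - m x))\<^sup>2 \<partial>lborel) = (\<integral>y. (\<Sum>b\<in>Basis. W x y * ((y - m x) \<bullet> b)\<^sup>2) \<partial>lborel)"
    by (simp add: sq sum_distrib_left)
  also have "\<dots> = (\<Sum>b\<in>Basis. (\<integral>y. W x y * ((y - m x) \<bullet> b)\<^sup>2 \<partial>lborel))"
    by (rule Bochner_Integration.integral_sum) (rule ib)
  finally have "(\<integral>y. W x y * (norm (y - m x))\<^sup>2 \<partial>lborel) / Z x
      = (\<Sum>b\<in>Basis. (\<integral>y. W x y * ((y - m x) \<bullet> b)\<^sup>2 \<partial>lborel) / Z x)"
    by (simp add: sum_divide_distrib)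
  also have "\<dots> \<le> (\<Sum>b\<in>(Basis::'a set). C)" by (rule sum_mono) (rule each)
  also have "\<dots> = real DIM('a) * C" by simp
  finally show ?thesis .
qed

end

context zsetting2
begin

lemma main_ineq:
  assumes d: "(soft_moreau f lam del has_derivative (\<lambda>h. g \<bullet> h)) (at x)"
    and P: "poincare (mu f lam del x) C"
  shows "norm (g - Df x) \<le> L * lam * norm g + L * sqrt (real DIM('a) * C)"
proof -
  define mx where "mx = m x"
  define E where "E = (\<integral>y. W x y * norm (y - x) \<partial>lborel) / Z x"
  define E1 where "E1 = (\<integral>y. W x y * norm (y - mx) \<partial>lborel) / Z x"
  have Zp: "Z x > 0" by (rule Z_pos)
  have W0: "\<And>y. 0 \<le> W x y" using W_pos by (simp add: less_imp_le)
  have mx_bound: "norm (x - mx) \<le> lam * norm g"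
  proof -
    have "g \<bullet> (mx - x) \<le> (mx - x) \<bullet> (x - mx) / lam" using shiftA[OF d, of "mx - x"] by (simp add: mx_def)
    also have "(mx - x) \<bullet> (x - mx) = - (norm (x - mx))\<^sup>2"
      by (metis inner_minus_left minus_diff_eq power2_norm_eq_inner)
    finally have "(norm (x - mx))\<^sup>2 / lam \<le> g \<bullet> (x - mx)"
      by (simp add: inner_diff_right)
    also have "\<dots> \<le> norm g * norm (x - mx)" by (rule norm_cauchy_schwarz)
    finally have "(norm (x - mx))\<^sup>2 \<le> lam * (norm g * norm (x - mx))"
      using lam by (simp add: field_simps)
    then have "norm (x - mx) * norm (x - mx) \<le> (lam * norm g) * norm (x - mx)"
      by (simp add: power2_eq_square mult_ac)
    then show ?thesis using lam
      by (cases "norm (x - mx) = 0") (auto simp: mult_le_cancel_right)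
  qed
  define u where "u = g - Df x"
  have iE: "integrable lborel (\<lambda>y. W x y * norm (y - x))"
    by (rule W_int_bound_real[of _ 1 "norm x + 1"]) (use diff_bound[simplified] in auto)
  have iE1: "integrable lborel (\<lambda>y. W x y * norm (y - mx))"
    by (rule W_int_bound_real[of _ 1 "norm mx + 1"]) (use diff_bound[simplified] in auto)
  have iE2: "integrable lborel (\<lambda>y. W x y * (norm (y - mx))\<^sup>2)"
    by (rule W_int_bound_real[of _ 2 "2 * (norm mx)\<^sup>2"]) (auto simp: sq_diff_bound)
  have u_bound: "norm u \<le> L * E"
  proof -
    have gu: "g \<bullet> u \<le> u \<bullet> n x" using shiftB[OF d, of u] .
    have i1: "integrable lborel (\<lambda>y. u \<bullet> (W x y *\<^sub>R Df y))" by (intro integrable_inner_right WD_int)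
    have i2: "integrable lborel (\<lambda>y. (u \<bullet> Df x) * W x y)" using W_int by simp
    have eq: "(\<lambda>y. W x y * (u \<bullet> (Df y - Df x))) = (\<lambda>y. u \<bullet> (W x y *\<^sub>R Df y) - (u \<bullet> Df x) * W x y)"
      by (auto simp: algebra_simps inner_diff_right)
    have int_eq: "(\<integral>y. W x y * (u \<bullet> (Df y - Df x)) \<partial>lborel) = u \<bullet> D x - (u \<bullet> Df x) * Z x"
    proof -
      have a: "(\<integral>y. u \<bullet> (W x y *\<^sub>R Df y) \<partial>lborel) = u \<bullet> D x"
        unfolding D_def by (rule integral_inner_right) (rule WD_int)
      have b: "(\<integral>y. (u \<bullet> Df x) * W x y \<partial>lborel) = (u \<bullet> Df x) * Z x"
        by (rule Bochner_Integration.integral_mult_right) (rule W_int)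
      show ?thesis unfolding eq Bochner_Integration.integral_diff[OF i1 i2] a b ..
    qed
    have iL: "integrable lborel (\<lambda>y. W x y * (u \<bullet> (Df y - Df x)))" unfolding eq using i1 i2 by simp
    have iR: "integrable lborel (\<lambda>y. norm u * L * (W x y * norm (y - x)))" using iE by simp
    have "(\<integral>y. W x y * (u \<bullet> (Df y - Df x)) \<partial>lborel) \<le> (\<integral>y. norm u * L * (W x y * norm (y - x)) \<partial>lborel)"
    proof (rule integral_mono[OF iL iR])
      fix y
      have "u \<bullet> (Df y - Df x) \<le> norm u * norm (Df y - Df x)" by (rule norm_cauchy_schwarz)
      also have "\<dots> \<le> norm u * (L * norm (y - x))" using Df_lip[of y x] by (simp add: mult_left_mono)
      finally have "W x y * (u \<bullet> (Df y - Df x)) \<le> W x y * (norm u * (L * norm (y - x)))"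
        using W0[of y] by (simp add: mult_left_mono)
      then show "W x y * (u \<bullet> (Df y - Df x)) \<le> norm u * L * (W x y * norm (y - x))" by (simp add: mult_ac)
    qed
    also have "\<dots> = norm u * L * (\<integral>y. W x y * norm (y - x) \<partial>lborel)"
      by (rule Bochner_Integration.integral_mult_right) (rule iE)
    finally have "u \<bullet> D x - (u \<bullet> Df x) * Z x \<le> norm u * L * (E * Z x)"
      unfolding int_eq E_def using Zp by simp
    then have "u \<bullet> n x - u \<bullet> Df x \<le> norm u * L * E"
      using Zp unfolding n_def by (simp add: field_simps)
    moreover have "(norm u)\<^sup>2 = g \<bullet> u - Df x \<bullet> u"
      unfolding u_def power2_norm_eq_inner by (simp add: inner_diff_left)
    ultimately have "(norm u)\<^sup>2 \<le> norm u * L * E" using gu by (simp add: inner_commute)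
    then have "norm u * norm u \<le> (L * E) * norm u" by (simp add: power2_eq_square mult_ac)
    moreover have "E \<ge> 0" unfolding E_def using Zp W0
      by (intro divide_nonneg_pos integral_nonneg_AE AE_I2) auto
    ultimately show ?thesis using L0
      by (cases "norm u = 0") (auto simp: mult_le_cancel_right)
  qed
  have E_split: "E \<le> E1 + norm (x - mx)"
  proof -
    have i2: "integrable lborel (\<lambda>y. W x y * (norm (y - mx) + norm (x - mx)))"
      using iE1 W_int by (simp add: distrib_left)
    have "(\<integral>y. W x y * norm (y - x) \<partial>lborel) \<le> (\<integral>y. W x y * (norm (y - mx) + norm (x - mx)) \<partial>lborel)"
    proof (rule integral_mono[OF iE i2])
      fix y
      have "norm (y - x) \<le> norm (y - mx) + norm (x - mx)"
        by (metis norm_diff_triangle_le norm_minus_commute order_refl)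
      then show "W x y * norm (y - x) \<le> W x y * (norm (y - mx) + norm (x - mx))"
        using W0[of y] by (simp add: mult_left_mono)
    qed
    also have "\<dots> = (\<integral>y. W x y * norm (y - mx) \<partial>lborel) + norm (x - mx) * Z x"
      using iE1 W_int by (simp add: distrib_left)
    finally show ?thesis unfolding E_def E1_def using Zp by (simp add: field_simps)
  qed
  have E1_bound: "E1 \<le> sqrt (real DIM('a) * C)"
  proof -
    have "E1 \<le> sqrt ((\<integral>y. W x y * (norm (y - mx))\<^sup>2 \<partial>lborel) / Z x)"
      unfolding E1_def by (rule cs_lemma[OF W_int iE1 iE2 W0 Zp])
    also have "\<dots> \<le> sqrt (real DIM('a) * C)"
      using poinc_var[OF P] by (simp add: mx_def)
    finally show ?thesis .
  qed
  have "norm u \<le> L * (E1 + norm (x - mx))" using u_bound E_split L0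
    by (meson mult_left_mono order_trans)
  also have "\<dots> \<le> L * (sqrt (real DIM('a) * C) + lam * norm g)"
    using E1_bound mx_bound L0 by (intro mult_left_mono add_mono) auto
  finally show ?thesis unfolding u_def by (simp add: algebra_simps)
qed

end

theorem theorem11:
  fixes f :: "'a::euclidean_space \<Rightarrow> real"
    and Df :: "'a \<Rightarrow> 'a"
    and lam del L :: real
    and Cp :: "'a \<Rightarrow> real"
    and xs :: "nat \<Rightarrow> 'a"
  assumes lam: "lam > 0" and del: "del > 0"
    and A1_cont: "continuous_on UNIV f"
    and A1_min: "\<exists>xstar. \<forall>y. f xstar \<le> f y"
    and A2: "(\<integral>\<^sup>+ y. ennreal (exp (- f y / del)) \<partial>lborel) < \<infinity>"
    and grad_f: "\<And>x. (f has_derivative (\<lambda>h. Df x \<bullet> h)) (at x)"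
    and smooth_f: "L-lipschitz_on UNIV Df"
    and poinc: "\<And>x. poincare (mu f lam del x) (Cp x)"
    and zoppa: "\<And>k. xs (Suc k) = zprox f lam del (xs k)"
  shows "(\<forall>x g. (soft_moreau f lam del has_derivative (\<lambda>h. g \<bullet> h)) (at x) \<longrightarrow>
            norm (g - Df x) \<le> L * lam * norm g + L * sqrt (real DIM('a) * Cp x))
       \<and> (\<forall>k g. (soft_moreau f lam del has_derivative (\<lambda>h. g \<bullet> h)) (at (xs k)) \<longrightarrow>
            norm (Df (xs k)) \<le> (1 + L * lam) * norm g + L * sqrt (real DIM('a) * Cp (xs k)))"
proof -
  interpret zsetting2 f lam del Df L
    by unfold_locales (use lam del A1_cont A2 grad_f smooth_f in auto)
  have main: "norm (g - Df x) \<le> L * lam * norm g + L * sqrt (real DIM('a) * Cp x)"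
    if "(soft_moreau f lam del has_derivative (\<lambda>h. g \<bullet> h)) (at x)" for x g
    using main_ineq[OF that poinc[of x]] .
  show ?thesis
  proof (intro conjI allI impI)
    fix x g assume "(soft_moreau f lam del has_derivative (\<lambda>h. g \<bullet> h)) (at x)"
    then show "norm (g - Df x) \<le> L * lam * norm g + L * sqrt (real DIM('a) * Cp x)" by (rule main)
  next
    fix k g assume "(soft_moreau f lam del has_derivative (\<lambda>h. g \<bullet> h)) (at (xs k))"
    from main[OF this] have "norm (g - Df (xs k)) \<le> L * lam * norm g + L * sqrt (real DIM('a) * Cp (xs k))" .
    moreover have "norm (Df (xs k)) \<le> norm g + norm (g - Df (xs k))"
      by (metis add_diff_cancel_left' diff_add_cancel norm_minus_commute norm_triangle_ineq4 norm_triangle_sub)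
    ultimately show "norm (Df (xs k)) \<le> (1 + L * lam) * norm g + L * sqrt (real DIM('a) * Cp (xs k))"
      by (simp add: algebra_simps)
  qed
qed

end
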